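(* Let $k\ge2$ and $n\ge k$. In the simultaneous sealed-bid auction of $n$ objects among an adversary ${\mathcal A}$ and $k-1$ disadvantaged bidders described in the context, suppose each disadvantaged bidder independently draws his bid vector $(b_1,\dots,b_n)$ from an $n$-dimensional probability distribution with $\sum_i b_i=1$ such that each $b_i$ has cumulative distribution function $F_k$, where $F_k(x)=\left(\frac nk x\right)^{\frac1{k-1}}$ for $x\in[0,\frac kn]$ and $F_k(x)=1$ for $x\in(\frac kn,1]$. Then for every (possibly randomized, independent of the disadvantaged bidders' bids) bid vector of ${\mathcal A}$, the expected number of objects won by ${\mathcal A}$ is at most $n/k$.
   Context: Auction model: $n$ objects are auctioned simultaneously to $k$ bidders; each bidder has budget $1$ and submits a vector of bids (one per object, positive reals) with sum at most $1$. Each object is won by the highest bidder on it; if $m$ bidders tie for the highest bid, each wins with probability $1/m$. The adversary ${\mathcal A}$ knows the bidding algorithms (bid distributions) of the other $k-1$ bidders but not their realized bids. *)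

theory Defs
  imports "HOL-Probability.Probability"
begin

definition bid_space :: "nat \<Rightarrow> (nat \<Rightarrow> real) measure" where
  "bid_space n = PiM {..<n} (\<lambda>_. borel)"

definition Fk :: "nat \<Rightarrow> nat \<Rightarrow> real \<Rightarrow> real" where
  "Fk n k x = (if x \<le> real k / real n
               then (real n / real k * x) powr (1 / (real k - 1)) else 1)"

text \<open>Probability that the adversary (bid vector a) wins object i against m opponents
  with realized bid vectors b 0, ..., b (m-1): ties among the highest bidders are
  broken uniformly at random.\<close>
definition win_share :: "nat \<Rightarrow> (nat \<Rightarrow> real) \<Rightarrow> (nat \<Rightarrow> nat \<Rightarrow> real) \<Rightarrow> nat \<Rightarrow> real" where
  "win_share m a b i =
     (if (\<forall>j<m. b j i \<le> a i)
      then 1 / (1 + real (card {j. j < m \<and> b j i = a i})) else 0)"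

definition adv_wins :: "nat \<Rightarrow> nat \<Rightarrow> (nat \<Rightarrow> real) \<Rightarrow> (nat \<Rightarrow> nat \<Rightarrow> real) \<Rightarrow> real" where
  "adv_wins n m a b = (\<Sum>i<n. win_share m a b i)"

end

theory Submission
  imports Defs
begin

lemma Fk_pow_le:
  assumes "k \<ge> 2" "n \<ge> k" "0 < x"
  shows "(Fk n k x) ^ (k-1) \<le> real n / real k * x"
proof (cases "x \<le> real k / real n")
  case True
  have pos: "real n / real k * x > 0" using assms by auto
  have "(Fk n k x) ^ (k-1) = ((real n / real k * x) powr (1 / (real k - 1))) ^ (k-1)"
    using True by (simp add: Fk_def)
  also have "\<dots> = (real n / real k * x) powr (real (k-1) * (1 / (real k - 1)))"
    using pos assms by (subst powr_power) auto
  also have "real (k-1) * (1 / (real k - 1)) = 1" using assms by (simp add: of_nat_diff)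
  finally show ?thesis using pos assms by simp
next
  case False
  then have "real k < real n * x" using assms
    by (simp add: field_simps)
  then have "1 \<le> real n / real k * x" using assms by (simp add: field_simps)
  then show ?thesis using False by (simp add: Fk_def)
qed

theorem lemma3p1:
  fixes n k :: nat
    and D :: "nat \<Rightarrow> (nat \<Rightarrow> real) measure"
    and A :: "(nat \<Rightarrow> real) measure"
  assumes "k \<ge> 2" and "n \<ge> k"
    and "\<forall>j<k-1. prob_space (D j) \<and> sets (D j) = sets (bid_space n)"
    and "\<forall>j<k-1. AE b in D j. (\<forall>i<n. b i > 0) \<and> (\<Sum>i<n. b i) = 1"
    and "\<forall>j<k-1. \<forall>i<n. \<forall>x\<in>{0..1}.
           measure (D j) {b \<in> space (D j). b i \<le> x} = Fk n k x"
    and "prob_space A" and "sets A = sets (bid_space n)"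
    and "AE a in A. (\<forall>i<n. a i > 0) \<and> (\<Sum>i<n. a i) \<le> 1"
  shows "(\<integral>a. (\<integral>b. adv_wins n (k-1) a b \<partial>(PiM {..<k-1} D)) \<partial>A) \<le> real n / real k"
proof -
  define m where "m = k - 1"
  define D' where "D' j = (if j < m then D j else D 0)" for j
  have m1: "m \<ge> 1" using assms(1) unfolding m_def by simp
  have probD': "prob_space (D' j)" for j
    using assms(3) m1 unfolding D'_def m_def by auto
  interpret P: product_prob_space D' "{..<m}"
    by (simp add: product_prob_space_def product_sigma_finite_def product_prob_space_axioms_def
        probD' prob_space_imp_sigma_finite)
  have PiD: "PiM {..<m} D = PiM {..<m} D'"
    by (rule PiM_cong) (auto simp: D'_def)
  have inner: "(\<integral>b. adv_wins n m a b \<partial>(PiM {..<m} D)) \<le> real n / real k"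
    if apos: "\<forall>i<n. a i > 0" and asum: "(\<Sum>i<n. a i) \<le> 1" for a
  proof -
    define S where "S i = (\<Pi>\<^sub>E j\<in>{..<m}. {x \<in> space (D' j). x i \<le> a i})" for i
    have Ssets: "{x \<in> space (D' j). x i \<le> c} \<in> sets (D' j)" if "i < n" for i j c
    proof -
      have "sets (D' j) = sets (bid_space n)" using assms(3) m1 unfolding D'_def m_def by auto
      then have "(\<lambda>x. x i) \<in> borel_measurable (D' j)"
        using measurable_cong_sets[of "D' j" "bid_space n" borel borel] that
        by (simp add: bid_space_def)
      then show ?thesis by measurable
    qed
    have Smeas: "measure (PiM {..<m} D') (S i) = (\<Prod>j\<in>{..<m}. measure (D' j) {x \<in> space (D' j). x i \<le> a i})"
      if "i < n" for i
    proof -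
      have "prod_emb {..<m} D' {..<m} (S i) = S i"
        unfolding S_def by (rule prod_emb_PiE_same_index) auto
      then show ?thesis
        using P.measure_PiM_emb[of "{..<m}" "\<lambda>j. {x \<in> space (D' j). x i \<le> a i}"] Ssets[OF that]
        unfolding S_def by auto
    qed
    have aile: "a i \<le> 1" if "i < n" for i
    proof -
      have "a i \<le> (\<Sum>i<n. a i)"
        using that apos by (intro member_le_sum) (auto intro: less_imp_le)
      then show ?thesis using asum by simp
    qed
    have Sbound: "measure (PiM {..<m} D') (S i) \<le> real n / real k * a i" if "i < n" for i
    proof -
      have "measure (PiM {..<m} D') (S i) = (\<Prod>j\<in>{..<m}. Fk n k (a i))"
        unfolding Smeas[OF that]
        apply (rule prod.cong, simp)
        using assms(5) that apos aile[OF that] unfolding D'_def m_def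
        by (auto intro!: less_imp_le)
      also have "\<dots> = (Fk n k (a i)) ^ (k-1)" by (simp add: m_def)
      also have "\<dots> \<le> real n / real k * a i"
        using Fk_pow_le[OF assms(1,2)] apos that by auto
      finally show ?thesis .
    qed
    have Sin: "S i \<in> sets (PiM {..<m} D')" if "i < n" for i
      unfolding S_def using Ssets[OF that] by (intro sets_PiM_I_finite) auto
    have "(\<integral>b. adv_wins n m a b \<partial>(PiM {..<m} D')) \<le> (\<integral>b. (\<Sum>i<n. indicator (S i) b) \<partial>(PiM {..<m} D'))"
    proof (rule integral_mono')
      show "integrable (PiM {..<m} D') (\<lambda>b. \<Sum>i<n. indicator (S i) b :: real)"
      proof (rule Bochner_Integration.integrable_sum)
        fix i assume "i \<in> {..<n}"
        then show "integrable (PiM {..<m} D') (indicator (S i) :: _ \<Rightarrow> real)"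
          using Sin[of i] by (intro integrable_real_indicator) (auto simp: P.P.emeasure_finite less_top[symmetric])
      qed
    next
      fix b assume b: "b \<in> space (PiM {..<m} D')"
      show "0 \<le> (\<Sum>i<n. indicator (S i) b :: real)" by (intro sum_nonneg) auto
      show "adv_wins n m a b \<le> (\<Sum>i<n. indicator (S i) b)"
        unfolding adv_wins_def
      proof (rule sum_mono)
        fix i assume "i \<in> {..<n}"
        show "win_share m a b i \<le> indicator (S i) b"
        proof (cases "\<forall>j<m. b j i \<le> a i")
          case True
          then have "b \<in> S i" using b unfolding S_def by (auto simp: space_PiM)
          then show ?thesis using True by (simp add: win_share_def)
        next
          case False
          then show ?thesis by (simp add: win_share_def del: not_all)
        qed
      qed
    qed
    also have "\<dots> = (\<Sum>i<n. measure (PiM {..<m} D') (S i))"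
      using Sin by (subst Bochner_Integration.integral_sum)
        (auto intro!: integrable_real_indicator simp: P.P.emeasure_finite less_top[symmetric])
    also have "\<dots> \<le> (\<Sum>i<n. real n / real k * a i)"
      by (rule sum_mono) (use Sbound in auto)
    also have "\<dots> = real n / real k * (\<Sum>i<n. a i)" by (simp add: sum_distrib_left)
    also have "\<dots> \<le> real n / real k * 1"
      using asum by (intro mult_left_mono) auto
    finally show ?thesis using PiD by simp
  qed
  interpret A: prob_space A by fact
  have "(\<integral>a. (\<integral>b. adv_wins n m a b \<partial>(PiM {..<m} D)) \<partial>A) \<le> (\<integral>a. real n / real k \<partial>A)"
    by (rule integral_mono_AE') (use assms(8) inner in auto)
  also have "\<dots> = real n / real k" by (simp add: A.prob_space)
  finally show ?thesis by (simp add: m_def)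
qed

end
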